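(* Let $f\in\mathcal{F}_k$. Then the Lovász hinge $L^f$ embeds the loss $\ell_{\text{abs}}^f:\mathcal{V}\times\mathcal{Y}\to\mathbb{R}_+$ given by $\ell_{\text{abs}}^f(v,y)=f(\{i: v_iy_i<0\})+f(\{i:v_iy_i\le 0\})$; moreover $\ell_{\text{abs}}^f$ coincides with the restriction of $L^f$ to $\mathcal{V}\times\mathcal{Y}$.
   Context: $[k]=\{1,\dots,k\}$, $\mathcal{Y}=\{-1,1\}^k$, $\mathcal{V}=\{-1,0,1\}^k$, $\Delta_\mathcal{Y}$ the probability distributions on $\mathcal{Y}$. $u\odot u'$ is the entrywise product, $\mathbbm{1}$ the all-ones vector, $(x)_+$ the entrywise positive part. $\mathcal{F}_k$ is the class of set functions $f:2^{[k]}\to\mathbb{R}$ that are submodular ($f(S)+f(T)\ge f(S\cup T)+f(S\cap T)$), increasing ($f(S\cup T)\ge f(S)$ for disjoint $S,T$) and normalized ($f(\emptyset)=0$). The Lovász extension is $F(x)=\max_{\pi}\sum_{i=1}^k x_{\pi_i}(f(\{\pi_1,\dots,\pi_i\})-f(\{\pi_1,\dots,\pi_{i-1}\}))$ for $x\in\mathbb{R}^k_+$ (max over permutations of $[k]$), and the Lovász hinge is $L^f(u,y)=F((\mathbbm{1}-u\odot y)_+)$ for $u\in\mathbb{R}^k,y\in\mathcal{Y}$. For a loss $\ell$ and $p\in\Delta_\mathcal{Y}$, $\ell(r;p)=\sum_y p_y\ell(r,y)$. A set $\mathcal{S}\subseteq\mathcal{R}$ is representative for a loss $\ell:\mathcal{R}\times\mathcal{Y}\to\mathbb{R}_+$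 if $\arg\min_{r\in\mathcal{R}}\ell(r;p)\cap\mathcal{S}\neq\emptyset$ for all $p$. A loss $L:\mathbb{R}^d\times\mathcal{Y}\to\mathbb{R}_+$ embeds $\ell:\mathcal{R}\times\mathcal{Y}\to\mathbb{R}_+$ if there are a representative set $\mathcal{S}$ for $\ell$ and an injective $\varphi:\mathcal{S}\to\mathbb{R}^d$ such that (i) $L(\varphi(r),y)=\ell(r,y)$ for all $r\in\mathcal{S},y\in\mathcal{Y}$, and (ii) for all $p\in\Delta_\mathcal{Y}$ and $r\in\mathcal{S}$: $r\in\arg\min_{r'\in\mathcal{R}}\ell(r';p)\iff\varphi(r)\in\arg\min_{u\in\mathbb{R}^d}L(u;p)$. *)

theory Defs
  imports "HOL-Analysis.Analysis"
begin

text \<open>The index set [k] is the universe of a finite type 'n, so k = CARD('n).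
  Vectors in R^k are elements of real^'n.\<close>

definition Ycube :: "(real^'n) set" where
  "Ycube = {y. \<forall>i. y $ i = -1 \<or> y $ i = 1}"

definition Vcube :: "(real^'n) set" where
  "Vcube = {v. \<forall>i. v $ i = -1 \<or> v $ i = 0 \<or> v $ i = 1}"

definition submodular :: "('n set \<Rightarrow> real) \<Rightarrow> bool" where
  "submodular f \<longleftrightarrow> (\<forall>S T. f S + f T \<ge> f (S \<union> T) + f (S \<inter> T))"

definition increasing_setfun :: "('n set \<Rightarrow> real) \<Rightarrow> bool" where
  "increasing_setfun f \<longleftrightarrow> (\<forall>S T. S \<inter> T = {} \<longrightarrow> f (S \<union> T) \<ge> f S)"

definition normalized_setfun :: "('n set \<Rightarrow> real) \<Rightarrow> bool" where
  "normalized_setfun f \<longleftrightarrow> f {} = 0"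

definition Fclass :: "('n::finite set \<Rightarrow> real) set" where
  "Fclass = {f. submodular f \<and> increasing_setfun f \<and> normalized_setfun f}"

definition lovasz_ext :: "('n::finite set \<Rightarrow> real) \<Rightarrow> real^'n \<Rightarrow> real" where
  "lovasz_ext f x = Max {(\<Sum>i<CARD('n). x $ (\<pi> ! i) *
        (f (set (take (Suc i) \<pi>)) - f (set (take i \<pi>)))) | \<pi>.
        distinct \<pi> \<and> set \<pi> = (UNIV :: 'n set)}"

definition lovasz_hinge :: "('n::finite set \<Rightarrow> real) \<Rightarrow> real^'n \<Rightarrow> real^'n \<Rightarrow> real" where
  "lovasz_hinge f u y = lovasz_ext f (\<chi> i. max 0 (1 - u $ i * y $ i))"

definition ell_abs :: "('n::finite set \<Rightarrow> real) \<Rightarrow> real^'n \<Rightarrow> real^'n \<Rightarrow> real" where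
  "ell_abs f v y = f {i. v $ i * y $ i < 0} + f {i. v $ i * y $ i \<le> 0}"

definition distributions :: "'y set \<Rightarrow> ('y \<Rightarrow> real) set" where
  "distributions Y = {p. (\<forall>y\<in>Y. p y \<ge> 0) \<and> (\<Sum>y\<in>Y. p y) = 1}"

definition exp_loss :: "('r \<Rightarrow> 'y \<Rightarrow> real) \<Rightarrow> 'y set \<Rightarrow> 'r \<Rightarrow> ('y \<Rightarrow> real) \<Rightarrow> real" where
  "exp_loss l Y r p = (\<Sum>y\<in>Y. p y * l r y)"

definition argmin_set :: "('r \<Rightarrow> real) \<Rightarrow> 'r set \<Rightarrow> 'r set" where
  "argmin_set g R = {r\<in>R. \<forall>r'\<in>R. g r \<le> g r'}"

definition representative :: "('r \<Rightarrow> 'y \<Rightarrow> real) \<Rightarrow> 'r set \<Rightarrow> 'y set \<Rightarrow> 'r set \<Rightarrow> bool" where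
  "representative l R Y S \<longleftrightarrow> S \<subseteq> R \<and>
     (\<forall>p\<in>distributions Y. argmin_set (\<lambda>r. exp_loss l Y r p) R \<inter> S \<noteq> {})"

text \<open>L : 'u \<times> Y \<rightarrow> R (surrogate domain all of 'u, e.g. real^'d) embeds l : R \<times> Y \<rightarrow> R.\<close>
definition embeds :: "('u \<Rightarrow> 'y \<Rightarrow> real) \<Rightarrow> ('r \<Rightarrow> 'y \<Rightarrow> real) \<Rightarrow> 'r set \<Rightarrow> 'y set \<Rightarrow> bool" where
  "embeds L l R Y \<longleftrightarrow> (\<exists>S \<phi>. representative l R Y S \<and> inj_on \<phi> S \<and>
     (\<forall>r\<in>S. \<forall>y\<in>Y. L (\<phi> r) y = l r y) \<and>
     (\<forall>p\<in>distributions Y. \<forall>r\<in>S.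
        r \<in> argmin_set (\<lambda>r'. exp_loss l Y r' p) R \<longleftrightarrow>
        \<phi> r \<in> argmin_set (\<lambda>u. exp_loss L Y u p) UNIV))"

end

theory Submission
  imports Defs
begin

definition perm_of :: "'n::finite list \<Rightarrow> bool" where
  "perm_of p \<longleftrightarrow> distinct p \<and> set p = UNIV"

definition dlt :: "('n::finite set \<Rightarrow> real) \<Rightarrow> 'n list \<Rightarrow> nat \<Rightarrow> real" where
  "dlt f p i = f (set (take (Suc i) p)) - f (set (take i p))"

definition PS :: "('n::finite set \<Rightarrow> real) \<Rightarrow> 'n list \<Rightarrow> real^'n \<Rightarrow> real" where
  "PS f p x = (\<Sum>i<CARD('n). x $ (p ! i) * dlt f p i)"

definition sorts :: "'n::finite list \<Rightarrow> real^'n \<Rightarrow> bool" where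
  "sorts p x \<longleftrightarrow> (\<forall>i j. i \<le> j \<longrightarrow> j < CARD('n) \<longrightarrow> x $ (p ! j) \<le> x $ (p ! i))"

definition upc :: "'n::finite set \<Rightarrow> 'n list \<Rightarrow> bool" where
  "upc S p \<longleftrightarrow> (\<forall>i j. i \<le> j \<longrightarrow> j < CARD('n) \<longrightarrow> p ! j \<in> S \<longrightarrow> p ! i \<in> S)"

lemma lovasz_ext_PS: "lovasz_ext f x = Max ((\<lambda>p. PS f p x) ` {p. perm_of p})"
  unfolding lovasz_ext_def PS_def perm_of_def dlt_def
  by (simp add: setcompr_eq_image)

lemma perm_length: "perm_of (p::'n::finite list) \<Longrightarrow> length p = CARD('n)"
  unfolding perm_of_def by (metis distinct_card)

lemma perms_finite: "finite {p::'n::finite list. perm_of p}"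
proof -
  have "{p::'n list. perm_of p} \<subseteq> {xs. set xs \<subseteq> UNIV \<and> length xs \<le> CARD('n)}"
    using perm_length by fastforce
  moreover have "finite {xs::'n list. set xs \<subseteq> UNIV \<and> length xs \<le> CARD('n)}"
    by (rule finite_lists_length_le) simp
  ultimately show ?thesis by (rule finite_subset)
qed

lemma perm_exists: "\<exists>p::'n::finite list. perm_of p"
  unfolding perm_of_def using finite_distinct_list[of "UNIV::'n set"] by auto

lemma mono_f: "f \<in> Fclass \<Longrightarrow> S \<subseteq> U \<Longrightarrow> f S \<le> f U"
proof -
  assume F: "f \<in> Fclass" and su: "S \<subseteq> U"
  have "S \<inter> (U - S) = {}" by blast
  then have "f (S \<union> (U - S)) \<ge> f S" using F unfolding Fclass_def increasing_setfun_def by blast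
  moreover have "S \<union> (U - S) = U" using su by blast
  ultimately show ?thesis by simp
qed

lemma dlt_nonneg: "f \<in> Fclass \<Longrightarrow> 0 \<le> dlt f p i"
  unfolding dlt_def using mono_f[of f "set (take i p)" "set (take (Suc i) p)"]
  set_take_subset_set_take[of i "Suc i" p] by simp

lemma nth_notin_take: "distinct xs \<Longrightarrow> m < length xs \<Longrightarrow> xs ! m \<notin> set (take m xs)"
proof
  assume d: "distinct xs" and m: "m < length xs" and "xs ! m \<in> set (take m xs)"
  then obtain i where i: "i < length (take m xs)" "take m xs ! i = xs ! m" by (auto simp: in_set_conv_nth)
  then have "i < m" "xs ! i = xs ! m" using m by auto
  moreover have "i < length xs" using \<open>i < m\<close> m by linarith
  ultimately have "i = m" using nth_eq_iff_index_eq[OF d, of i m] m by blast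
  then show False using \<open>i < m\<close> by simp
qed

lemma key:
  assumes F: "f \<in> Fclass" and P: "perm_of (p::'n::finite list)"
  shows "m \<le> CARD('n) \<Longrightarrow> (\<Sum>i<m. if p ! i \<in> S then dlt f p i else 0) \<le> f (S \<inter> set (take m p))
     \<and> (upc S p \<longrightarrow> (\<Sum>i<m. if p ! i \<in> S then dlt f p i else 0) = f (S \<inter> set (take m p)))"
proof (induction m)
  case 0
  then show ?case using F by (simp add: Fclass_def normalized_setfun_def)
next
  case (Suc m)
  have len: "length p = CARD('n)" using perm_length[OF P] .
  have ml: "m < length p" using Suc.prems len by simp
  have dist: "distinct p" using P perm_of_def by auto
  define Pm where "Pm = set (take m p)"
  define a where "a = p ! m"
  have tk: "set (take (Suc m) p) = Pm \<union> {a}"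
    unfolding Pm_def a_def using ml by (simp add: take_Suc_conv_app_nth)
  have anot: "a \<notin> Pm" unfolding Pm_def a_def using nth_notin_take[OF dist ml] .
  have IH: "(\<Sum>i<m. if p ! i \<in> S then dlt f p i else 0) \<le> f (S \<inter> Pm)
     \<and> (upc S p \<longrightarrow> (\<Sum>i<m. if p ! i \<in> S then dlt f p i else 0) = f (S \<inter> Pm))"
    using Suc by (simp add: Pm_def)
  have dm: "dlt f p m = f (Pm \<union> {a}) - f Pm" unfolding dlt_def using tk Pm_def by simp
  show ?case
  proof (cases "a \<in> S")
    case True
    have sub: "f Pm + f ((S \<inter> Pm) \<union> {a}) \<ge> f (Pm \<union> ((S \<inter> Pm) \<union> {a})) + f (Pm \<inter> ((S \<inter> Pm) \<union> {a}))"
      using F unfolding Fclass_def submodular_def by blast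
    have e1: "Pm \<union> ((S \<inter> Pm) \<union> {a}) = Pm \<union> {a}" by blast
    have e2: "Pm \<inter> ((S \<inter> Pm) \<union> {a}) = S \<inter> Pm" using anot by blast
    have e3: "S \<inter> (Pm \<union> {a}) = (S \<inter> Pm) \<union> {a}" using True by blast
    have le: "dlt f p m \<le> f (S \<inter> (Pm \<union> {a})) - f (S \<inter> Pm)"
      using sub e1 e2 e3 dm by simp
    have upc_eq: "upc S p \<Longrightarrow> S \<inter> Pm = Pm"
    proof -
      assume u: "upc S p"
      have "\<forall>x\<in>Pm. x \<in> S"
      proof
        fix x assume "x \<in> Pm"
        then obtain i where i: "i < m" "x = p ! i" unfolding Pm_def
          using ml by (auto simp: in_set_conv_nth)
        have "i \<le> m" "m < CARD('n)" using i Suc.prems by auto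
        then show "x \<in> S" using u True i unfolding upc_def a_def by blast
      qed
      then show ?thesis by blast
    qed
    show ?thesis using IH le upc_eq dm e3 True tk by (auto simp: a_def)
  next
    case False
    have "S \<inter> (Pm \<union> {a}) = S \<inter> Pm" using False by blast
    then show ?thesis using IH False tk by (simp add: a_def)
  qed
qed

lemma sorts_upc: "sorts p x \<Longrightarrow> upc {j. c \<le> x $ j} p"
  unfolding sorts_def upc_def by (auto intro: order_trans)

definition xw :: "real^'n \<Rightarrow> real^'n \<Rightarrow> real^'n" where
  "xw w y = (\<chi> i. 1 - w $ i * y $ i)"

lemma prod_cases: "v \<in> Vcube \<Longrightarrow> y \<in> Ycube \<Longrightarrow> v $ i * y $ i = -1 \<or> v $ i * y $ i = 0 \<or> v $ i * y $ i = 1"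
proof -
  assume "v \<in> Vcube" "y \<in> Ycube"
  then have "v $ i = -1 \<or> v $ i = 0 \<or> v $ i = 1" "y $ i = -1 \<or> y $ i = 1"
    unfolding Vcube_def Ycube_def by auto
  then show ?thesis by auto
qed

lemma sum_split_PS:
  fixes p :: "'n::finite list"
  assumes "\<And>j. x $ j = (if j \<in> A then 1 else 0) + (if j \<in> B then 1 else 0)"
  shows "PS f p x = (\<Sum>i<CARD('n). if p ! i \<in> A then dlt f p i else 0) + (\<Sum>i<CARD('n). if p ! i \<in> B then dlt f p i else 0)"
  unfolding PS_def assms sum.distrib[symmetric] by (rule sum.cong) (auto simp: algebra_simps)

lemma take_all_perm: "perm_of (p::'n::finite list) \<Longrightarrow> set (take CARD('n) p) = UNIV"
  using perm_length[of p] unfolding perm_of_def by simp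

lemma base_eq:
  fixes p :: "'n::finite list"
  assumes F: "f \<in> Fclass" and v: "v \<in> Vcube" and y: "y \<in> Ycube" and P: "perm_of p"
    and S: "sorts p (xw v y)"
  shows "PS f p (xw v y) = ell_abs f v y"
proof -
  define A where "A = {j. v $ j * y $ j \<le> 0}"
  define B where "B = {j. v $ j * y $ j < 0}"
  have dec: "xw v y $ j = (if j \<in> A then 1 else 0) + (if j \<in> B then 1 else 0)" for j
    unfolding xw_def A_def B_def using prod_cases[OF v y, of j] by auto
  have A: "A = {j. 1 \<le> xw v y $ j}" unfolding A_def xw_def by auto
  have Bj: "v $ j * y $ j < 0 \<longleftrightarrow> 2 \<le> 1 - v $ j * y $ j" for j
    using prod_cases[OF v y, of j] by auto
  have B: "B = {j. 2 \<le> xw v y $ j}" unfolding B_def xw_def using Bj by simp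
  have uA: "upc A p" using sorts_upc[OF S] A by simp
  have uB: "upc B p" using sorts_upc[OF S] B by simp
  show ?thesis
    using sum_split_PS[OF dec, of f p] key[OF F P, of "CARD('n)" A] key[OF F P, of "CARD('n)" B]
      uA uB take_all_perm[OF P]
    by (simp add: ell_abs_def A_def B_def)
qed

lemma hinge_V: "v \<in> Vcube \<Longrightarrow> y \<in> Ycube \<Longrightarrow> (\<chi> i. max 0 (1 - v $ i * y $ i)) = xw v y"
proof -
  assume v: "v \<in> Vcube" and y: "y \<in> Ycube"
  have "v $ i * y $ i \<le> 1" for i using prod_cases[OF v y, of i] by linarith
  then show ?thesis unfolding xw_def by (simp add: vec_eq_iff)
qed

lemma upper:
  fixes p :: "'n::finite list"
  assumes F: "f \<in> Fclass" and v: "v \<in> Vcube" and y: "y \<in> Ycube" and P: "perm_of p"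
  shows "PS f p (xw v y) \<le> ell_abs f v y"
proof -
  define A where "A = {j. v $ j * y $ j \<le> 0}"
  define B where "B = {j. v $ j * y $ j < 0}"
  have dec: "xw v y $ j = (if j \<in> A then 1 else 0) + (if j \<in> B then 1 else 0)" for j
    unfolding xw_def A_def B_def using prod_cases[OF v y, of j] by auto
  show ?thesis
    using sum_split_PS[OF dec, of f p] key[OF F P, of "CARD('n)" A] key[OF F P, of "CARD('n)" B]
      take_all_perm[OF P]
    by (simp add: ell_abs_def A_def B_def)
qed

lemma sort_perm:
  fixes x :: "real^'n::finite"
  shows "\<exists>p. perm_of p \<and> sorts p x"
proof -
  obtain q :: "'n list" where q: "perm_of q" using perm_exists by blast
  define p where "p = sort_key (\<lambda>i. - x $ i) q"
  have pp: "perm_of p" using q unfolding p_def perm_of_def by simp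
  have len: "length p = CARD('n)" using perm_length[OF pp] .
  have "sorted (map (\<lambda>i. - x $ i) p)" unfolding p_def by simp
  then have "sorts p x" unfolding sorts_def using len
    by (auto dest: sorted_nth_mono[where i=i and j=j for i j] simp: sorted_iff_nth_mono)
  then show ?thesis using pp by blast
qed

lemma part2:
  assumes F: "f \<in> Fclass" and v: "v \<in> Vcube" and y: "y \<in> Ycube"
  shows "ell_abs f v y = lovasz_hinge f v y"
proof -
  have h: "lovasz_hinge f v y = Max ((\<lambda>p. PS f p (xw v y)) ` {p. perm_of p})"
    unfolding lovasz_hinge_def lovasz_ext_PS hinge_V[OF v y] ..
  obtain p where p: "perm_of p" "sorts p (xw v y)" using sort_perm by blast
  have "Max ((\<lambda>p. PS f p (xw v y)) ` {p. perm_of p}) = ell_abs f v y"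
  proof (rule antisym)
    show "Max ((\<lambda>p. PS f p (xw v y)) ` {p. perm_of p}) \<le> ell_abs f v y"
      using perms_finite perm_exists upper[OF F v y] by (subst Max_le_iff) auto
    show "ell_abs f v y \<le> Max ((\<lambda>p. PS f p (xw v y)) ` {p. perm_of p})"
      using base_eq[OF F v y p] perms_finite p by (intro Max_ge) (auto intro!: image_eqI[of _ _ p])
  qed
  then show ?thesis using h by simp
qed

lemma sc1: "y = -1 \<or> y = 1 \<Longrightarrow> sgn (w::real) * y = sgn (w * y)"
  by (auto simp: sgn_mult)

lemma sc2: "y = -1 \<or> y = (1::real) \<Longrightarrow> ((w - a * sgn w) / (1 - a)) * y = (w * y - a * sgn (w * y)) / (1 - a)"
  by (auto simp: sgn_minus divide_simps algebra_simps)

lemma sc3: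
  fixes a t s :: real
  assumes "0 < a" "a < 1" "t = 0 \<or> a \<le> \<bar>t\<bar>" "s = 0 \<or> a \<le> \<bar>s\<bar>" "t \<le> s"
  shows "(t - a * sgn t) / (1 - a) \<le> (s - a * sgn s) / (1 - a)"
proof -
  have "t - a * sgn t \<le> s - a * sgn s"
    using assms by (cases "t > 0"; cases "t < 0"; cases "s > 0"; cases "s < 0") (auto simp: sgn_if)
  then show ?thesis using assms by (intro divide_right_mono) auto
qed

lemma sgn_mono_r: "(t::real) \<le> s \<Longrightarrow> sgn t \<le> sgn s"
  by (auto simp: sgn_if)

lemma sorts_trans: "sorts p x \<Longrightarrow> (\<forall>k l. x $ k \<le> x $ l \<longrightarrow> x' $ k \<le> x' $ l) \<Longrightarrow> sorts p x'"
  unfolding sorts_def by blast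

lemma PS_lin: "(\<forall>j. x $ j = a * x1 $ j + b * x2 $ j) \<Longrightarrow> PS f p x = a * PS f p x1 + b * PS f p x2"
  unfolding PS_def by (simp add: sum_distrib_left sum.distrib algebra_simps)

lemma PS_mono: "f \<in> Fclass \<Longrightarrow> (\<forall>j. x $ j \<le> x' $ j) \<Longrightarrow> PS f p x \<le> PS f p x'"
  unfolding PS_def by (intro sum_mono mult_right_mono dlt_nonneg) auto

lemma Ycomp: "y \<in> Ycube \<Longrightarrow> y $ i = -1 \<or> y $ i = 1"
  unfolding Ycube_def by auto

lemma Qlem:
  fixes p :: "real^'n::finite \<Rightarrow> real"
  assumes F: "f \<in> Fclass" and pn: "\<forall>y\<in>Ycube. 0 \<le> p y"
  shows "\<forall>w::real^'n. (\<forall>i. \<bar>w $ i\<bar> \<le> 1) \<longrightarrow> card {i. w $ i \<notin> {-1,0,1}} = N \<longrightarrow>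
    (\<forall>pf. (\<forall>y\<in>Ycube. perm_of (pf y) \<and> sorts (pf y) (xw w y)) \<longrightarrow>
      (\<exists>v\<in>Vcube. (\<Sum>y\<in>Ycube. p y * ell_abs f v y) \<le> (\<Sum>y\<in>Ycube. p y * PS f (pf y) (xw w y))))"
proof (induction N rule: less_induct)
  case (less N)
  show ?case
  proof (intro allI impI)
    fix w :: "real^'n" and pf :: "real^'n \<Rightarrow> 'n list"
    assume cube: "\<forall>i. \<bar>w $ i\<bar> \<le> 1" and cN: "card {i. w $ i \<notin> {-1,0,1}} = N"
      and srt: "\<forall>y\<in>Ycube. perm_of (pf y) \<and> sorts (pf y) (xw w y)"
    define Fr where "Fr = {i. w $ i \<notin> {-1,0,1}}"
    show "\<exists>v\<in>Vcube. (\<Sum>y\<in>Ycube. p y * ell_abs f v y) \<le> (\<Sum>y\<in>Ycube. p y * PS f (pf y) (xw w y))"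
    proof (cases "Fr = {}")
      case True
      then have wV: "w \<in> Vcube" unfolding Fr_def Vcube_def by auto
      have "\<forall>y\<in>Ycube. PS f (pf y) (xw w y) = ell_abs f w y" using base_eq[OF F wV] srt by auto
      then have "(\<Sum>y\<in>Ycube. p y * ell_abs f w y) = (\<Sum>y\<in>Ycube. p y * PS f (pf y) (xw w y))"
        by (intro sum.cong) auto
      then show ?thesis using wV by (intro bexI[of _ w]) auto
    next
      case False
      define a where "a = Min ((\<lambda>i. \<bar>w $ i\<bar>) ` Fr)"
      have "a \<in> (\<lambda>i. \<bar>w $ i\<bar>) ` Fr" using False unfolding a_def by (intro Min_in) auto
      then obtain i0 where i0: "i0 \<in> Fr" "a = \<bar>w $ i0\<bar>" by auto
      have amin: "\<forall>i\<in>Fr. a \<le> \<bar>w $ i\<bar>" unfolding a_def by auto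
      have a0: "0 < a" "a < 1" using i0 cube[rule_format, of i0] unfolding Fr_def by auto
      have wa: "\<forall>i. w $ i = 0 \<or> a \<le> \<bar>w $ i\<bar>"
      proof
        fix i show "w $ i = 0 \<or> a \<le> \<bar>w $ i\<bar>"
        proof (cases "i \<in> Fr")
          case True then show ?thesis using amin by auto
        next
          case False then show ?thesis using a0 unfolding Fr_def by auto
        qed
      qed
      define v where "v = (\<chi> i. sgn (w $ i))"
      define w' where "w' = (\<chi> i. (w $ i - a * sgn (w $ i)) / (1 - a))"
      have vV: "v \<in> Vcube" unfolding Vcube_def v_def by (auto simp: sgn_if)
      have cube': "\<forall>i. \<bar>w' $ i\<bar> \<le> 1"
      proof
        fix i
        have h: "w $ i = 0 \<or> a \<le> \<bar>w $ i\<bar>" "\<bar>w $ i\<bar> \<le> 1" using wa cube by auto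
        have "\<bar>w $ i - a * sgn (w $ i)\<bar> \<le> 1 - a"
          using h a0 by (cases "w $ i > 0"; cases "w $ i < 0") (auto simp: sgn_if)
        then show "\<bar>w' $ i\<bar> \<le> 1" using a0 unfolding w'_def by (simp add: abs_divide divide_le_eq_1)
      qed
      have sub: "{i. w' $ i \<notin> {-1,0,1}} \<subseteq> Fr - {i0}"
      proof
        fix i assume i: "i \<in> {i. w' $ i \<notin> {-1,0,1}}"
        have "i \<noteq> i0"
        proof
          assume "i = i0"
          then have "w $ i - a * sgn (w $ i) = 0" using i0 by (cases "w $ i > 0"; cases "w $ i < 0") (auto simp: sgn_if)
          then show False using i unfolding w'_def by simp
        qed
        moreover have "i \<in> Fr"
        proof (rule ccontr)
          assume "i \<notin> Fr"
          then have "w $ i = -1 \<or> w $ i = 0 \<or> w $ i = 1" unfolding Fr_def by auto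
          then have "w' $ i = w $ i" unfolding w'_def using a0 by (auto simp: divide_simps)
          then show False using i \<open>i \<notin> Fr\<close> unfolding Fr_def by auto
        qed
        ultimately show "i \<in> Fr - {i0}" by auto
      qed
      have cardlt: "card {i. w' $ i \<notin> {-1,0,1}} < N"
      proof -
        have "card {i. w' $ i \<notin> {-1,0,1}} \<le> card (Fr - {i0})" using sub by (intro card_mono) auto
        also have "\<dots> < card Fr" using i0 by (intro card_Diff1_less) auto
        finally show ?thesis using cN Fr_def by simp
      qed
      have tw: "\<And>y k. y \<in> Ycube \<Longrightarrow> w $ k * y $ k = 0 \<or> a \<le> \<bar>w $ k * y $ k\<bar>"
      proof -
        fix y :: "real^'n" and k :: 'n assume yy: "y \<in> Ycube"
        have "\<bar>y $ k\<bar> = 1" using Ycomp[OF yy, of k] by auto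
        then have "\<bar>w $ k * y $ k\<bar> = \<bar>w $ k\<bar>" by (simp add: abs_mult)
        then show "w $ k * y $ k = 0 \<or> a \<le> \<bar>w $ k * y $ k\<bar>" using wa by auto
      qed
      have srt': "\<forall>y\<in>Ycube. perm_of (pf y) \<and> sorts (pf y) (xw w' y)"
      proof
        fix y :: "real^'n" assume y: "y \<in> Ycube"
        have "\<forall>k l. xw w y $ k \<le> xw w y $ l \<longrightarrow> xw w' y $ k \<le> xw w' y $ l"
        proof (intro allI impI)
          fix k l :: 'n assume "xw w y $ k \<le> xw w y $ l"
          then have le: "w $ l * y $ l \<le> w $ k * y $ k" unfolding xw_def by simp
          have "w' $ l * y $ l \<le> w' $ k * y $ k"
            unfolding w'_def vec_lambda_beta sc2[OF Ycomp[OF y, of l]] sc2[OF Ycomp[OF y, of k]]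
            using sc3[OF a0 tw[OF y, of l] tw[OF y, of k] le] .
          then show "xw w' y $ k \<le> xw w' y $ l" unfolding xw_def by simp
        qed
        then show "perm_of (pf y) \<and> sorts (pf y) (xw w' y)" using srt y sorts_trans by blast
      qed
      have srtv: "\<forall>y\<in>Ycube. sorts (pf y) (xw v y)"
      proof
        fix y :: "real^'n" assume y: "y \<in> Ycube"
        have "\<forall>k l. xw w y $ k \<le> xw w y $ l \<longrightarrow> xw v y $ k \<le> xw v y $ l"
        proof (intro allI impI)
          fix k l :: 'n assume "xw w y $ k \<le> xw w y $ l"
          then have le: "w $ l * y $ l \<le> w $ k * y $ k" unfolding xw_def by simp
          have "v $ l * y $ l \<le> v $ k * y $ k"
            unfolding v_def vec_lambda_beta sc1[OF Ycomp[OF y, of l]] sc1[OF Ycomp[OF y, of k]]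
            using sgn_mono_r[OF le] .
          then show "xw v y $ k \<le> xw v y $ l" unfolding xw_def by simp
        qed
        then show "sorts (pf y) (xw v y)" using srt y sorts_trans by blast
      qed
      obtain v' where v': "v' \<in> Vcube"
        "(\<Sum>y\<in>Ycube. p y * ell_abs f v' y) \<le> (\<Sum>y\<in>Ycube. p y * PS f (pf y) (xw w' y))"
        using less.IH[OF cardlt, THEN spec[of _ w']] cube' srt' by blast
      have lin: "\<forall>y\<in>Ycube. PS f (pf y) (xw w y) = a * ell_abs f v y + (1 - a) * PS f (pf y) (xw w' y)"
      proof
        fix y :: "real^'n" assume y: "y \<in> Ycube"
        have "\<forall>j. xw w y $ j = a * xw v y $ j + (1 - a) * xw w' y $ j"
        proof
          fix j
          define c where "c = (w $ j - a * sgn (w $ j)) / (1 - a)"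
          have "(1 - a) * c = w $ j - a * sgn (w $ j)" unfolding c_def using a0 by simp
          then have c: "(1 - a) * c * y $ j = (w $ j - a * sgn (w $ j)) * y $ j" by simp
          have "1 - w $ j * y $ j = a * (1 - sgn (w $ j) * y $ j) + (1 - a) * (1 - c * y $ j)"
            using c by (simp add: algebra_simps)
          then show "xw w y $ j = a * xw v y $ j + (1 - a) * xw w' y $ j"
            unfolding xw_def v_def w'_def c_def by simp
        qed
        then have "PS f (pf y) (xw w y) = a * PS f (pf y) (xw v y) + (1 - a) * PS f (pf y) (xw w' y)"
          by (rule PS_lin)
        then show "PS f (pf y) (xw w y) = a * ell_abs f v y + (1 - a) * PS f (pf y) (xw w' y)"
          using base_eq[OF F vV y] srt srtv y by auto
      qed
      define Ev where "Ev = (\<Sum>y\<in>Ycube. p y * ell_abs f v y)"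
      define Ev' where "Ev' = (\<Sum>y\<in>Ycube. p y * ell_abs f v' y)"
      define X where "X = (\<Sum>y\<in>Ycube. p y * PS f (pf y) (xw w' y))"
      have "(\<Sum>y\<in>Ycube. p y * PS f (pf y) (xw w y)) = (\<Sum>y\<in>Ycube. a * (p y * ell_abs f v y) + (1 - a) * (p y * PS f (pf y) (xw w' y)))"
      proof (intro sum.cong refl)
        fix y :: "real^'n" assume "y \<in> Ycube"
        then have "PS f (pf y) (xw w y) = a * ell_abs f v y + (1 - a) * PS f (pf y) (xw w' y)" using lin by blast
        then have "p y * PS f (pf y) (xw w y) = p y * (a * ell_abs f v y + (1 - a) * PS f (pf y) (xw w' y))" by simp
        then show "p y * PS f (pf y) (xw w y) = a * (p y * ell_abs f v y) + (1 - a) * (p y * PS f (pf y) (xw w' y))"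
          by (simp add: algebra_simps)
      qed
      also have "\<dots> = a * Ev + (1 - a) * X"
        unfolding Ev_def X_def by (simp add: sum.distrib sum_distrib_left)
      finally have eq: "(\<Sum>y\<in>Ycube. p y * PS f (pf y) (xw w y)) = a * Ev + (1 - a) * X" .
      have "Ev' \<le> X" using v' unfolding Ev'_def X_def by simp
      then have ge: "a * Ev + (1 - a) * Ev' \<le> a * Ev + (1 - a) * X" using a0 by (simp add: mult_left_mono)
      show ?thesis
      proof (cases "Ev \<le> Ev'")
        case True
        have "0 \<le> (1 - a) * (Ev' - Ev)" using a0 True by (intro mult_nonneg_nonneg) auto
        then have "Ev \<le> a * Ev + (1 - a) * Ev'" by (simp add: algebra_simps)
        then show ?thesis using eq ge vV unfolding Ev_def by (intro bexI[of _ v]) auto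
      next
        case False
        have "0 \<le> a * (Ev - Ev')" using a0 False by (intro mult_nonneg_nonneg) auto
        then have "Ev' \<le> a * Ev + (1 - a) * Ev'" by (simp add: algebra_simps)
        then show ?thesis using eq ge v'(1) unfolding Ev'_def by (intro bexI[of _ v']) auto
      qed
    qed
  qed
qed

lemma Vcube_finite: "finite (Vcube :: (real^'n::finite) set)"
proof -
  have "Vcube = vec_nth -` (Pi UNIV (\<lambda>_. {-1, 0, 1::real}) :: ('n \<Rightarrow> real) set)"
    unfolding Vcube_def by (auto simp: Pi_def)
  moreover have "finite (Pi UNIV (\<lambda>_. {-1, 0, 1::real}) :: ('n \<Rightarrow> real) set)"
    using finite_PiE[of "UNIV::'n set" "\<lambda>_. {-1, 0, 1::real}"] by (simp add: PiE_UNIV_domain)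
  moreover have "inj vec_nth" by (auto simp: inj_on_def vec_eq_iff)
  ultimately show ?thesis by (metis finite_vimageI)
qed

lemma zero_V: "0 \<in> Vcube" unfolding Vcube_def by simp

lemma key_u:
  fixes f :: "'n::finite set \<Rightarrow> real"
  assumes F: "f \<in> Fclass" and p: "p \<in> distributions Ycube"
  shows "\<exists>v\<in>Vcube. exp_loss (ell_abs f) Ycube v p \<le> exp_loss (lovasz_hinge f) Ycube (u::real^'n) p"
proof -
  have pn: "\<forall>y\<in>Ycube. 0 \<le> p y" using p unfolding distributions_def by auto
  define w :: "real^'n" where "w = (\<chi> i. max (-1) (min 1 (u $ i)))"
  have cube: "\<forall>i. \<bar>w $ i\<bar> \<le> 1" unfolding w_def by auto
  define pf where "pf = (\<lambda>y. SOME q. perm_of q \<and> sorts q (xw w y))"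
  have srt: "\<forall>y\<in>Ycube. perm_of (pf y) \<and> sorts (pf y) (xw w y)"
    unfolding pf_def using someI_ex[OF sort_perm] by blast
  obtain v where v: "v \<in> Vcube" "(\<Sum>y\<in>Ycube. p y * ell_abs f v y) \<le> (\<Sum>y\<in>Ycube. p y * PS f (pf y) (xw w y))"
    using Qlem[OF F pn, where N="card {i. w $ i \<notin> {-1,0,1}}", THEN spec[of _ w]] cube srt by blast
  have "\<forall>y\<in>Ycube. PS f (pf y) (xw w y) \<le> lovasz_hinge f u y"
  proof
    fix y :: "real^'n" assume y: "y \<in> Ycube"
    have "\<forall>j. xw w y $ j \<le> (\<chi> i. max 0 (1 - u $ i * y $ i)) $ j"
    proof
      fix j
      show "xw w y $ j \<le> (\<chi> i. max 0 (1 - u $ i * y $ i)) $ j"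
        using Ycomp[OF y, of j] unfolding xw_def w_def by (auto simp: max_def min_def)
    qed
    then have "PS f (pf y) (xw w y) \<le> PS f (pf y) (\<chi> i. max 0 (1 - u $ i * y $ i))"
      by (rule PS_mono[OF F])
    also have "\<dots> \<le> lovasz_hinge f u y"
      unfolding lovasz_hinge_def lovasz_ext_PS using perms_finite srt y
      by (intro Max_ge) (auto intro!: image_eqI[of _ _ "pf y"])
    finally show "PS f (pf y) (xw w y) \<le> lovasz_hinge f u y" .
  qed
  then have "(\<Sum>y\<in>Ycube. p y * PS f (pf y) (xw w y)) \<le> (\<Sum>y\<in>Ycube. p y * lovasz_hinge f u y)"
    using pn by (intro sum_mono mult_left_mono) auto
  then show ?thesis using v unfolding exp_loss_def by (intro bexI[of _ v]) auto
qed

theorem theorem2: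
  fixes f :: "'n::finite set \<Rightarrow> real"
  assumes "f \<in> Fclass"
  shows "embeds (lovasz_hinge f) (ell_abs f) Vcube Ycube \<and>
         (\<forall>v\<in>Vcube. \<forall>y\<in>Ycube. ell_abs f v y = lovasz_hinge f v y)"
proof
  note F = assms
  have P2: "\<forall>v\<in>Vcube. \<forall>y\<in>Ycube. ell_abs f v y = lovasz_hinge f v y"
    using part2[OF F] by blast
  have EQ: "exp_loss (lovasz_hinge f) Ycube v p = exp_loss (ell_abs f) Ycube v p" if "v \<in> Vcube" for v p
    unfolding exp_loss_def using P2 that by (intro sum.cong) auto
  show "\<forall>v\<in>Vcube. \<forall>y\<in>Ycube. ell_abs f v y = lovasz_hinge f v y" by (rule P2)
  show "embeds (lovasz_hinge f) (ell_abs f) Vcube Ycube"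
    unfolding embeds_def
  proof (intro exI[of _ Vcube] exI[of _ id] conjI ballI)
    show "representative (ell_abs f) Vcube Ycube Vcube"
      unfolding representative_def
    proof (intro conjI ballI)
      fix p :: "real^'n \<Rightarrow> real"
      let ?g = "\<lambda>r. exp_loss (ell_abs f) Ycube r p"
      have ne: "Vcube \<noteq> {}" using zero_V by blast
      have "arg_min_on ?g Vcube \<in> Vcube" "\<not>(\<exists>x\<in>Vcube. ?g x < ?g (arg_min_on ?g Vcube))"
        using arg_min_if_finite[OF Vcube_finite ne, of ?g] by auto
      then have "arg_min_on ?g Vcube \<in> argmin_set ?g Vcube"
        unfolding argmin_set_def by (auto simp: not_less)
      then show "argmin_set ?g Vcube \<inter> Vcube \<noteq> {}"
        using \<open>arg_min_on ?g Vcube \<in> Vcube\<close> by blast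
    qed simp
    show "inj_on id Vcube" by simp
    fix r y :: "real^'n" assume "r \<in> Vcube" "y \<in> Ycube"
    then show "lovasz_hinge f (id r) y = ell_abs f r y" using P2 by simp
  next
    fix p :: "real^'n \<Rightarrow> real" and r :: "real^'n" assume p: "p \<in> distributions Ycube" and r: "r \<in> Vcube"
    show "(r \<in> argmin_set (\<lambda>r'. exp_loss (ell_abs f) Ycube r' p) Vcube) =
          (id r \<in> argmin_set (\<lambda>u. exp_loss (lovasz_hinge f) Ycube u p) UNIV)"
    proof
      assume a: "r \<in> argmin_set (\<lambda>r'. exp_loss (ell_abs f) Ycube r' p) Vcube"
      have "exp_loss (lovasz_hinge f) Ycube r p \<le> exp_loss (lovasz_hinge f) Ycube u p" for u
      proof -
        obtain v where v: "v \<in> Vcube" "exp_loss (ell_abs f) Ycube v p \<le> exp_loss (lovasz_hinge f) Ycube u p"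
          using key_u[OF F p] by blast
        have "exp_loss (lovasz_hinge f) Ycube r p = exp_loss (ell_abs f) Ycube r p" using EQ r by simp
        also have "\<dots> \<le> exp_loss (ell_abs f) Ycube v p" using a v(1) unfolding argmin_set_def by auto
        finally show ?thesis using v(2) by simp
      qed
      then show "id r \<in> argmin_set (\<lambda>u. exp_loss (lovasz_hinge f) Ycube u p) UNIV"
        unfolding argmin_set_def by simp
    next
      assume a: "id r \<in> argmin_set (\<lambda>u. exp_loss (lovasz_hinge f) Ycube u p) UNIV"
      have "exp_loss (ell_abs f) Ycube r p \<le> exp_loss (ell_abs f) Ycube v p" if v: "v \<in> Vcube" for v
      proof -
        have "exp_loss (lovasz_hinge f) Ycube r p \<le> exp_loss (lovasz_hinge f) Ycube v p"
          using a unfolding argmin_set_def by simp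
        then show ?thesis using EQ[OF r, of p] EQ[OF v, of p] by simp
      qed
      then show "r \<in> argmin_set (\<lambda>r'. exp_loss (ell_abs f) Ycube r' p) Vcube"
        unfolding argmin_set_def using r by auto
    qed
  qed
qed

end
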